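(* Let $\Phi(x_1,\dots,x_n)$ be an open formula of the language $\mathcal{L}_{\mathrm{pAb}}$ with $n$ variables, and let $N=\sharp(\Phi)$. Assume that $\mathbf{R}_{-1}\models\exists x_1\cdots\exists x_n\,\Phi$. Then there are integers $c$ and $M$ and real numbers $a_1,\dots,a_n$ such that $\Phi(a_1,\dots,a_n)$ holds in $\mathbf{R}_{-1}$, $-2^M\le a_i\le 2^M$ for each $1\le i\le n$, and the binary representation of $M$ has at most $cN\log_2 N$ bits.
   Context: $\mathcal{L}_{\mathrm{pAb}}=\langle +,-,0,-1,\wedge,\vee\rangle$ is the language of pointed abelian lattice-ordered groups. $\mathbf{R}_{-1}=\langle \mathbb{R},+,-,\wedge,\vee,0,-1\rangle$ is the additive group of the reals with $\wedge=\min$, $\vee=\max$, and constant $-1$ interpreted as $-1$. An open formula is a finite Boolean combination (negation, conjunction, disjunction) of atoms $\phi=\psi$ with $\phi,\psi$ terms. The size $\sharp(\phi)$ of a term is the number of occurrences of variables and constants in $\phi$; the size $\sharp(\Phi)$ of an open formula is the sum of the sizes of all occurrences of terms in its atoms. *)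

theory Defs
  imports Complex_Main
begin

datatype pterm =
    Var nat
  | Zero
  | MinusOne
  | Add pterm pterm
  | Neg pterm
  | Meet pterm pterm
  | Join pterm pterm

datatype pform =
    Eq pterm pterm
  | FNot pform
  | FAnd pform pform
  | FOr pform pform

fun tsize :: "pterm \<Rightarrow> nat" where
  "tsize (Var i) = 1"
| "tsize Zero = 1"
| "tsize MinusOne = 1"
| "tsize (Add s t) = tsize s + tsize t"
| "tsize (Neg t) = tsize t"
| "tsize (Meet s t) = tsize s + tsize t"
| "tsize (Join s t) = tsize s + tsize t"

fun fsize :: "pform \<Rightarrow> nat" where
  "fsize (Eq s t) = tsize s + tsize t"
| "fsize (FNot f) = fsize f"
| "fsize (FAnd f g) = fsize f + fsize g"
| "fsize (FOr f g) = fsize f + fsize g"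

fun tvars :: "pterm \<Rightarrow> nat set" where
  "tvars (Var i) = {i}"
| "tvars Zero = {}"
| "tvars MinusOne = {}"
| "tvars (Add s t) = tvars s \<union> tvars t"
| "tvars (Neg t) = tvars t"
| "tvars (Meet s t) = tvars s \<union> tvars t"
| "tvars (Join s t) = tvars s \<union> tvars t"

fun fvars :: "pform \<Rightarrow> nat set" where
  "fvars (Eq s t) = tvars s \<union> tvars t"
| "fvars (FNot f) = fvars f"
| "fvars (FAnd f g) = fvars f \<union> fvars g"
| "fvars (FOr f g) = fvars f \<union> fvars g"

fun teval :: "(nat \<Rightarrow> real) \<Rightarrow> pterm \<Rightarrow> real" where
  "teval a (Var i) = a i"
| "teval a Zero = 0"
| "teval a MinusOne = -1"
| "teval a (Add s t) = teval a s + teval a t"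
| "teval a (Neg t) = - teval a t"
| "teval a (Meet s t) = min (teval a s) (teval a t)"
| "teval a (Join s t) = max (teval a s) (teval a t)"

fun fholds :: "(nat \<Rightarrow> real) \<Rightarrow> pform \<Rightarrow> bool" where
  "fholds a (Eq s t) = (teval a s = teval a t)"
| "fholds a (FNot f) = (\<not> fholds a f)"
| "fholds a (FAnd f g) = (fholds a f \<and> fholds a g)"
| "fholds a (FOr f g) = (fholds a f \<or> fholds a g)"

text \<open>Number of bits of the binary representation of a natural number (0 has 0 digits).\<close>
fun nbits :: "nat \<Rightarrow> nat" where
  "nbits n = (if n = 0 then 0 else Suc (nbits (n div 2)))"

definition ibits :: "int \<Rightarrow> nat" where
  "ibits M = nbits (nat \<bar>M\<bar>) + 1"

end

theory Submission imports Defs begin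

type_synonym form = "(nat \<Rightarrow> int) \<times> int"

definition ev :: "nat set \<Rightarrow> form \<Rightarrow> (nat \<Rightarrow> real) \<Rightarrow> real" where
  "ev V L y = (\<Sum>i\<in>V. of_int (fst L i) * y i) + of_int (snd L)"

definition bnd :: "int \<Rightarrow> form \<Rightarrow> bool" where
  "bnd B L \<longleftrightarrow> (\<forall>j. \<bar>fst L j\<bar> \<le> B) \<and> \<bar>snd L\<bar> \<le> B"

definition comb :: "nat \<Rightarrow> form \<Rightarrow> form \<Rightarrow> form" where
  "comb v L1 L2 = (\<lambda>i. fst L2 v * fst L1 i - fst L1 v * fst L2 i, fst L2 v * snd L1 - fst L1 v * snd L2)"

fun R :: "nat \<Rightarrow> real \<Rightarrow> real" where
  "R 0 b = 1"
| "R (Suc n) b = (real n + 1) * b * R n (2 * b^2) + b + 1"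

lemma R_ge1: "b \<ge> 1 \<Longrightarrow> R n b \<ge> 1"
proof (induction n arbitrary: b)
  case 0 then show ?case by simp
next
  case (Suc n)
  have "b^2 \<ge> 1" using Suc.prems by (simp add: one_le_power)
  then have "2 * b^2 \<ge> 1" by linarith
  then have "R n (2*b^2) \<ge> 1" using Suc.IH by blast
  then have "(real n + 1) * b * R n (2 * b^2) \<ge> 0" using Suc.prems by simp
  then show ?case using Suc.prems by simp
qed

lemma sgn_le_iff: "sgn (a::real) = sgn b \<Longrightarrow> (a \<le> 0 \<longleftrightarrow> b \<le> 0)"
  by (metis sgn_le_0_iff)
lemma sgn_less_iff: "sgn (a::real) = sgn b \<Longrightarrow> (a < 0 \<longleftrightarrow> b < 0)"
  by (metis sgn_less)

lemma interp:
  fixes f g :: "'a \<Rightarrow> real"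
  assumes fin: "finite I" and sg: "\<forall>i\<in>I. \<forall>j\<in>I. sgn (f i - f j) = sgn (g i - g j)"
  shows "\<exists>t. (\<forall>i\<in>I. sgn (t - g i) = sgn (s - f i)) \<and> (\<forall>C. (\<forall>i\<in>I. \<bar>g i\<bar> \<le> C) \<longrightarrow> 0 \<le> C \<longrightarrow> \<bar>t\<bar> \<le> C + 1)"
proof -
  have le: "f i \<le> f j \<longleftrightarrow> g i \<le> g j" if "i \<in> I" "j \<in> I" for i j
    using sgn_le_iff[OF sg[rule_format, OF that]] by simp
  have lt: "f i < f j \<longleftrightarrow> g i < g j" if "i \<in> I" "j \<in> I" for i j
    using sgn_less_iff[OF sg[rule_format, OF that]] by simp
  show ?thesis
  proof (cases "\<exists>i0\<in>I. f i0 = s")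
    case True
    then obtain i0 where i0: "i0 \<in> I" "f i0 = s" by blast
    show ?thesis
    proof (intro exI[of _ "g i0"] conjI allI impI ballI)
      fix i assume "i \<in> I"
      then show "sgn (g i0 - g i) = sgn (s - f i)" using sg i0 by (metis (no_types))
    next
      fix C assume "\<forall>i\<in>I. \<bar>g i\<bar> \<le> C" "0 \<le> C"
      then show "\<bar>g i0\<bar> \<le> C + 1" using i0(1) by (smt (verit))
    qed
  next
    case False
    define Lo where "Lo = {i\<in>I. f i < s}"
    define Hi where "Hi = {i\<in>I. s < f i}"
    have I: "I = Lo \<union> Hi"
    proof
      show "I \<subseteq> Lo \<union> Hi"
      proof
        fix i assume i: "i \<in> I"
        then have "f i \<noteq> s" using False by blast
        then show "i \<in> Lo \<union> Hi" using i unfolding Lo_def Hi_def by auto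
      qed
      show "Lo \<union> Hi \<subseteq> I" unfolding Lo_def Hi_def by auto
    qed
    have finL: "finite Lo" and finH: "finite Hi" using fin unfolding Lo_def Hi_def by auto
    have sgn1: "sgn (s - f i) = 1" if "i \<in> Lo" for i using that unfolding Lo_def by (simp add: sgn_real_def)
    have sgn2: "sgn (s - f i) = -1" if "i \<in> Hi" for i using that unfolding Hi_def by (simp add: sgn_real_def)
    have maxL: "\<exists>i1\<in>Lo. \<forall>i\<in>Lo. f i \<le> f i1" if "Lo \<noteq> {}"
    proof -
      have "Max (f ` Lo) \<in> f ` Lo" using finL that by (intro Max_in) auto
      then obtain i1 where i1: "i1 \<in> Lo" "f i1 = Max (f ` Lo)" by (metis imageE)
      have "\<forall>i\<in>Lo. f i \<le> f i1" unfolding i1(2) using finL by (intro ballI Max_ge) auto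
      then show ?thesis using i1(1) by (intro bexI[of _ i1])
    qed
    have minH: "\<exists>i2\<in>Hi. \<forall>i\<in>Hi. f i2 \<le> f i" if "Hi \<noteq> {}"
    proof -
      have "Min (f ` Hi) \<in> f ` Hi" using finH that by (intro Min_in) auto
      then obtain i2 where i2: "i2 \<in> Hi" "f i2 = Min (f ` Hi)" by (metis imageE)
      have "\<forall>i\<in>Hi. f i2 \<le> f i" unfolding i2(2) using finH by (intro ballI Min_le) auto
      then show ?thesis using i2(1) by (intro bexI[of _ i2])
    qed
    have LoI: "Lo \<subseteq> I" and HiI: "Hi \<subseteq> I" unfolding Lo_def Hi_def by auto
    show ?thesis
    proof (cases "Lo = {}")
      case L: True
      show ?thesis
      proof (cases "Hi = {}")
        case True
        then show ?thesis using I L by (intro exI[of _ 0]) auto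
      next
        case H: False
        then obtain i2 where i2: "i2 \<in> Hi" "\<forall>i\<in>Hi. f i2 \<le> f i" using minH by blast
        show ?thesis
        proof (intro exI[of _ "g i2 - 1"] conjI allI impI ballI)
          fix i assume i: "i \<in> I"
          then have "i \<in> Hi" using I L by blast
          then have "g i2 \<le> g i" using le[of i2 i] i2 LoI HiI by auto
          then show "sgn (g i2 - 1 - g i) = sgn (s - f i)" using sgn2 \<open>i \<in> Hi\<close> by simp
        next
          fix C assume "\<forall>i\<in>I. \<bar>g i\<bar> \<le> C" "0 \<le> C"
          then have "\<bar>g i2\<bar> \<le> C" using i2(1) HiI by auto
          then show "\<bar>g i2 - 1\<bar> \<le> C + 1" by linarith
        qed
      qed
    next
      case L: False
      then obtain i1 where i1: "i1 \<in> Lo" "\<forall>i\<in>Lo. f i \<le> f i1" using maxL by blast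
      show ?thesis
      proof (cases "Hi = {}")
        case H: True
        show ?thesis
        proof (intro exI[of _ "g i1 + 1"] conjI allI impI ballI)
          fix i assume i: "i \<in> I"
          then have "i \<in> Lo" using I H by blast
          then have "g i \<le> g i1" using le[of i i1] i1 LoI HiI by auto
          then show "sgn (g i1 + 1 - g i) = sgn (s - f i)" using sgn1 \<open>i \<in> Lo\<close> by simp
        next
          fix C assume "\<forall>i\<in>I. \<bar>g i\<bar> \<le> C" "0 \<le> C"
          then have "\<bar>g i1\<bar> \<le> C" using i1(1) LoI by auto
          then show "\<bar>g i1 + 1\<bar> \<le> C + 1" by linarith
        qed
      next
        case H: False
        then obtain i2 where i2: "i2 \<in> Hi" "\<forall>i\<in>Hi. f i2 \<le> f i" using minH by blast
        have "f i1 < f i2" using i1 i2 unfolding Lo_def Hi_def by auto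
        then have g12: "g i1 < g i2" using lt[of i1 i2] i1 i2 LoI HiI by auto
        show ?thesis
        proof (intro exI[of _ "(g i1 + g i2) / 2"] conjI allI impI ballI)
          fix i assume i: "i \<in> I"
          show "sgn ((g i1 + g i2) / 2 - g i) = sgn (s - f i)"
          proof (cases "i \<in> Lo")
            case True
            then have "g i \<le> g i1" using le[of i i1] i1 LoI HiI by auto
            then show ?thesis using sgn1 True g12 by simp
          next
            case False
            then have "i \<in> Hi" using I i by blast
            then have "g i2 \<le> g i" using le[of i2 i] i2 LoI HiI by auto
            then show ?thesis using sgn2 \<open>i \<in> Hi\<close> g12 by simp
          qed
        next
          fix C assume "\<forall>i\<in>I. \<bar>g i\<bar> \<le> C" "0 \<le> C"
          then have "\<bar>g i1\<bar> \<le> C" "\<bar>g i2\<bar> \<le> C" using i1 i2 LoI HiI by auto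
          moreover have "\<bar>g i1 + g i2\<bar> \<le> \<bar>g i1\<bar> + \<bar>g i2\<bar>" by (rule abs_triangle_ineq)
          moreover have "\<bar>(g i1 + g i2) / 2\<bar> = \<bar>g i1 + g i2\<bar> / 2" by simp
          ultimately show "\<bar>(g i1 + g i2) / 2\<bar> \<le> C + 1" by (simp add: abs_le_iff)
        qed
      qed
    qed
  qed
qed

lemma ev_insert: "finite V \<Longrightarrow> v \<notin> V \<Longrightarrow> ev (insert v V) L y = of_int (fst L v) * y v + ev V L y"
  unfolding ev_def by (simp add: sum.insert)

lemma ev_comb: "ev V (comb v L1 L2) y = of_int (fst L2 v) * ev V L1 y - of_int (fst L1 v) * ev V L2 y"
proof -
  have "(\<Sum>i\<in>V. of_int (fst L2 v * fst L1 i - fst L1 v * fst L2 i) * y i) =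
     (\<Sum>i\<in>V. of_int (fst L2 v) * (of_int (fst L1 i) * y i) - of_int (fst L1 v) * (of_int (fst L2 i) * y i))"
    by (rule sum.cong) (simp_all add: left_diff_distrib)
  also have "\<dots> = of_int (fst L2 v) * (\<Sum>i\<in>V. of_int (fst L1 i) * y i) - of_int (fst L1 v) * (\<Sum>i\<in>V. of_int (fst L2 i) * y i)"
    by (simp add: sum_subtractf sum_distrib_left)
  finally show ?thesis unfolding ev_def comb_def fst_conv snd_conv by (simp add: right_diff_distrib distrib_left)
qed

lemma ev_cong: "(\<And>i. i \<in> V \<Longrightarrow> y i = z i) \<Longrightarrow> ev V L y = ev V L z"
  unfolding ev_def by (auto intro!: sum.cong)

lemma ev_bound:
  assumes "bnd B L" "\<forall>i\<in>V. \<bar>y i\<bar> \<le> r" "finite V"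
  shows "\<bar>ev V L y\<bar> \<le> real (card V) * of_int B * r + of_int B"
proof -
  have "\<bar>\<Sum>i\<in>V. of_int (fst L i) * y i\<bar> \<le> (\<Sum>i\<in>V. \<bar>of_int (fst L i) * y i\<bar>)"
    by (rule sum_abs)
  also have "\<dots> \<le> (\<Sum>i\<in>V. of_int B * r)"
  proof (rule sum_mono)
    fix i assume i: "i \<in> V"
    have a: "\<bar>of_int (fst L i)\<bar> \<le> (of_int B::real)" using assms(1) unfolding bnd_def
      by (metis of_int_abs of_int_le_iff)
    have "\<bar>of_int (fst L i) * y i\<bar> = \<bar>of_int (fst L i)\<bar> * \<bar>y i\<bar>" by (simp add: abs_mult)
    also have "\<dots> \<le> of_int B * r"
      using a assms(2) i by (intro mult_mono) auto
    finally show "\<bar>of_int (fst L i) * y i\<bar> \<le> of_int B * r" .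
  qed
  also have "\<dots> = real (card V) * of_int B * r" by simp
  finally have 1: "\<bar>\<Sum>i\<in>V. of_int (fst L i) * y i\<bar> \<le> real (card V) * of_int B * r" .
  have 2: "\<bar>(of_int (snd L)::real)\<bar> \<le> of_int B" using assms(1) unfolding bnd_def
    by (metis of_int_abs of_int_le_iff)
  show ?thesis unfolding ev_def using 1 2 by linarith
qed

lemma bnd_comb: "bnd B L1 \<Longrightarrow> bnd B L2 \<Longrightarrow> bnd (2 * B^2) (comb v L1 L2)"
proof -
  assume b1: "bnd B L1" and b2: "bnd B L2"
  have key: "\<bar>p * q - r * s\<bar> \<le> 2 * B^2" if "\<bar>p\<bar> \<le> B" "\<bar>q\<bar> \<le> B" "\<bar>r\<bar> \<le> B" "\<bar>s\<bar> \<le> B" for p q r s :: int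
  proof -
    have "\<bar>p * q\<bar> \<le> B * B" unfolding abs_mult using that by (intro mult_mono) auto
    moreover have "\<bar>r * s\<bar> \<le> B * B" unfolding abs_mult using that by (intro mult_mono) auto
    ultimately show ?thesis by (simp add: power2_eq_square)
  qed
  have "\<forall>j. \<bar>fst L1 j\<bar> \<le> B" "\<bar>snd L1\<bar> \<le> B" "\<forall>j. \<bar>fst L2 j\<bar> \<le> B" "\<bar>snd L2\<bar> \<le> B"
    using b1 b2 unfolding bnd_def by auto
  then show ?thesis unfolding bnd_def comb_def fst_conv snd_conv
    by (intro conjI allI key) auto
qed

lemma bnd_mono: "bnd B L \<Longrightarrow> B \<le> B' \<Longrightarrow> bnd B' L"
  unfolding bnd_def by (meson order_trans)

lemma elim:
  assumes "finite V"
  shows "\<forall>B F x. 1 \<le> B \<longrightarrow> finite F \<longrightarrow> (\<forall>L\<in>F. bnd B L) \<longrightarrow>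
     (\<exists>y. (\<forall>L\<in>F. sgn (ev V L y) = sgn (ev V L x)) \<and> (\<forall>i\<in>V. \<bar>y i\<bar> \<le> R (card V) (of_int B)))"
  using assms
proof (induction V rule: finite_induct)
  case empty
  then show ?case by auto
next
  case (insert v V)
  show ?case
  proof (intro allI impI)
    fix B :: int and F :: "form set" and x
    assume B1: "1 \<le> B" and finF: "finite F" and bF: "\<forall>L\<in>F. bnd B L"
    define F' where "F' = F \<union> (\<lambda>(L1,L2). comb v L1 L2) ` (F \<times> F)"
    have BB: "B * 1 \<le> B * B" using B1 by (intro mult_left_mono) auto
    have B'1: "1 \<le> 2 * B^2" using BB B1 unfolding power2_eq_square by linarith
    have "B \<le> 2 * B^2" using BB B1 unfolding power2_eq_square by linarith
    have bF': "\<forall>L\<in>F'. bnd (2 * B^2) L"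
    proof
      fix L assume L: "L \<in> F'"
      show "bnd (2 * B^2) L"
      proof (cases "L \<in> F")
        case True
        then show ?thesis using bF \<open>B \<le> 2 * B^2\<close> bnd_mono by blast
      next
        case False
        then obtain L1 L2 where "L1 \<in> F" "L2 \<in> F" "L = comb v L1 L2"
          using L unfolding F'_def by auto
        then show ?thesis using bF bnd_comb by blast
      qed
    qed
    have finF': "finite F'" unfolding F'_def using finF by simp
    have bF'': "\<And>L. L \<in> F' \<Longrightarrow> bnd (2 * B^2) L" using bF' by blast
    obtain y' where y'sg: "\<forall>L\<in>F'. sgn (ev V L y') = sgn (ev V L x)"
      and y'b: "\<forall>i\<in>V. \<bar>y' i\<bar> \<le> R (card V) (of_int (2 * B^2))"
      using insert.IH B'1 finF' bF' by blast
    define I where "I = {L\<in>F. fst L v \<noteq> 0}"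
    define T where "T L z = - ev V L z / of_int (fst L v)" for L z
    have Tdiff: "T L1 z - T L2 z = - ev V (comb v L1 L2) z / (of_int (fst L1 v) * of_int (fst L2 v))"
      if "fst L1 v \<noteq> 0" "fst L2 v \<noteq> 0" for L1 L2 z
      using that unfolding T_def ev_comb by (simp add: field_simps)
    have sgI: "\<forall>i\<in>I. \<forall>j\<in>I. sgn (T i x - T j x) = sgn (T i y' - T j y')"
    proof (intro ballI)
      fix i j assume i: "i \<in> I" and j: "j \<in> I"
      then have "(i, j) \<in> F \<times> F" unfolding I_def by auto
      then have c: "comb v i j \<in> F'" unfolding F'_def by (intro UnI2 image_eqI[of _ _ "(i,j)"]) auto
      show "sgn (T i x - T j x) = sgn (T i y' - T j y')"
        using i j y'sg[rule_format, OF c] unfolding I_def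
        by (simp add: Tdiff sgn_mult sgn_divide)
    qed
    have finI: "finite I" using finF unfolding I_def by simp
    obtain t where tsg: "\<forall>L\<in>I. sgn (t - T L y') = sgn (x v - T L x)"
      and tb: "\<forall>C. (\<forall>L\<in>I. \<bar>T L y'\<bar> \<le> C) \<longrightarrow> 0 \<le> C \<longrightarrow> \<bar>t\<bar> \<le> C + 1"
      using interp[OF finI sgI, of "x v"] by (elim exE conjE)
    define r where "r = R (card V) (of_int (2 * B^2))"
    have r1: "1 \<le> r" unfolding r_def using B'1 R_ge1 by (metis of_int_1_le_iff)
    define C where "C = real (card V) * of_int B * r + of_int B"
    have C0: "0 \<le> C" unfolding C_def using B1 r1 by simp
    have TC: "\<forall>L\<in>I. \<bar>T L y'\<bar> \<le> C"
    proof
      fix L assume L: "L \<in> I"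
      then have k: "fst L v \<noteq> 0" and LF: "L \<in> F" unfolding I_def by auto
      have "\<bar>ev V L y'\<bar> \<le> C" unfolding C_def r_def
        using ev_bound[OF bspec[OF bF LF] y'b insert.hyps(1)] by simp
      moreover have "\<bar>T L y'\<bar> \<le> \<bar>ev V L y'\<bar>"
      proof -
        have "1 \<le> \<bar>fst L v\<bar>" using k by linarith
        then have "1 \<le> \<bar>(of_int (fst L v)::real)\<bar>" by (metis of_int_abs of_int_1_le_iff)
        have "\<bar>T L y'\<bar> = \<bar>ev V L y'\<bar> / \<bar>of_int (fst L v)\<bar>" unfolding T_def by (simp add: abs_divide)
        also have "\<dots> \<le> \<bar>ev V L y'\<bar> / 1" using \<open>1 \<le> \<bar>(of_int (fst L v)::real)\<bar>\<close> by (intro divide_left_mono) auto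
        finally show ?thesis by simp
      qed
      ultimately show "\<bar>T L y'\<bar> \<le> C" by linarith
    qed
    have tC: "\<bar>t\<bar> \<le> C + 1" using tb TC C0 by blast
    define y where "y = y'(v := t)"
    have evy: "ev V L y = ev V L y'" for L
      unfolding y_def using insert.hyps(2) by (intro ev_cong) auto
    show "\<exists>y. (\<forall>L\<in>F. sgn (ev (insert v V) L y) = sgn (ev (insert v V) L x)) \<and>
             (\<forall>i\<in>insert v V. \<bar>y i\<bar> \<le> R (card (insert v V)) (of_int B))"
    proof (intro exI[of _ y] conjI ballI)
      fix L assume LF: "L \<in> F"
      have LF': "L \<in> F'" using LF unfolding F'_def by simp
      show "sgn (ev (insert v V) L y) = sgn (ev (insert v V) L x)"
      proof (cases "fst L v = 0")
        case True
        then show ?thesis using y'sg LF' evy by (simp add: ev_insert[OF insert.hyps])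
      next
        case False
        then have LI: "L \<in> I" unfolding I_def using LF by simp
        have e: "ev (insert v V) L z = of_int (fst L v) * (z v - T L z)" for z
          using False unfolding ev_insert[OF insert.hyps] T_def by (simp add: field_simps)
        have "T L y = T L y'" unfolding T_def using evy by simp
        then show ?thesis unfolding e using tsg LI by (simp add: sgn_mult y_def)
      qed
    next
      fix i assume i: "i \<in> insert v V"
      have Rs: "R (card (insert v V)) (of_int B) = (real (card V) + 1) * of_int B * r + of_int B + 1"
        using insert.hyps by (simp add: r_def power2_eq_square)
      have b1r: "(1::real) \<le> of_int B" using B1 by simp
      have X1: "1 * 1 \<le> (real (card V) + 1) * of_int B"
        using b1r by (intro mult_mono) auto
      have "1 * r \<le> (real (card V) + 1) * of_int B * r"
        using X1 r1 by (intro mult_right_mono) auto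
      then have rle: "r \<le> (real (card V) + 1) * of_int B * r" by simp
      have Br0: "0 \<le> of_int B * r" using b1r r1 by simp
      show "\<bar>y i\<bar> \<le> R (card (insert v V)) (of_int B)"
      proof (cases "i = v")
        case True
        have "C + 1 \<le> (real (card V) + 1) * of_int B * r + of_int B + 1"
          unfolding C_def using Br0 by (simp add: algebra_simps)
        moreover have "\<bar>y i\<bar> = \<bar>t\<bar>" using True by (simp add: y_def)
        ultimately show ?thesis unfolding Rs using tC by linarith
      next
        case False
        then have "i \<in> V" using i by simp
        then have "\<bar>y i\<bar> \<le> r" using y'b False unfolding y_def r_def by simp
        then show ?thesis unfolding Rs using b1r rle by simp
      qed
    qed
  qed
qed

definition dif :: "form \<Rightarrow> form \<Rightarrow> form" where
  "dif L1 L2 = (\<lambda>j. fst L1 j - fst L2 j, snd L1 - snd L2)"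

fun lin :: "(nat \<Rightarrow> real) \<Rightarrow> pterm \<Rightarrow> form" where
  "lin x (Var i) = ((\<lambda>j. if j = i then 1 else 0), 0)"
| "lin x Zero = ((\<lambda>j. 0), 0)"
| "lin x MinusOne = ((\<lambda>j. 0), -1)"
| "lin x (Add s t) = ((\<lambda>j. fst (lin x s) j + fst (lin x t) j), snd (lin x s) + snd (lin x t))"
| "lin x (Neg t) = ((\<lambda>j. - fst (lin x t) j), - snd (lin x t))"
| "lin x (Meet s t) = (if teval x s \<le> teval x t then lin x s else lin x t)"
| "lin x (Join s t) = (if teval x s \<le> teval x t then lin x t else lin x s)"

fun tforms :: "(nat \<Rightarrow> real) \<Rightarrow> pterm \<Rightarrow> form set" where
  "tforms x (Var i) = {}"
| "tforms x Zero = {}"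
| "tforms x MinusOne = {}"
| "tforms x (Add s t) = tforms x s \<union> tforms x t"
| "tforms x (Neg t) = tforms x t"
| "tforms x (Meet s t) = insert (dif (lin x s) (lin x t)) (tforms x s \<union> tforms x t)"
| "tforms x (Join s t) = insert (dif (lin x s) (lin x t)) (tforms x s \<union> tforms x t)"

fun fforms :: "(nat \<Rightarrow> real) \<Rightarrow> pform \<Rightarrow> form set" where
  "fforms x (Eq s t) = insert (dif (lin x s) (lin x t)) (tforms x s \<union> tforms x t)"
| "fforms x (FNot f) = fforms x f"
| "fforms x (FAnd f g) = fforms x f \<union> fforms x g"
| "fforms x (FOr f g) = fforms x f \<union> fforms x g"

lemma ev_dif: "ev V (dif L1 L2) y = ev V L1 y - ev V L2 y"
  unfolding ev_def dif_def by (simp add: sum_subtractf left_diff_distrib)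

lemma ev_var: "i \<in> V \<Longrightarrow> finite V \<Longrightarrow> ev V ((\<lambda>j. if j = i then 1 else 0), 0) y = y i"
proof -
  assume i: "i \<in> V" and f: "finite V"
  have "(\<Sum>j\<in>V. of_int (if j = i then 1 else 0) * y j) = (\<Sum>j\<in>V. if j = i then y j else 0)"
    by (rule sum.cong) auto
  also have "\<dots> = y i" using i f by (simp add: sum.delta)
  finally show ?thesis unfolding ev_def by simp
qed

lemma ev_add: "ev V ((\<lambda>j. fst L1 j + fst L2 j), snd L1 + snd L2) y = ev V L1 y + ev V L2 y"
  unfolding ev_def by (simp add: sum.distrib distrib_right)

lemma ev_neg: "ev V ((\<lambda>j. - fst L j), - snd L) y = - ev V L y"
  unfolding ev_def by (simp add: sum_negf)

lemma ev_zero: "ev V ((\<lambda>j. 0), c) y = of_int c"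
  unfolding ev_def by simp

lemma lin_self: "finite V \<Longrightarrow> tvars t \<subseteq> V \<Longrightarrow> teval x t = ev V (lin x t) x"
  by (induction t) (auto simp: ev_var ev_add ev_neg ev_zero)

lemma lin_correct:
  assumes "finite V"
  shows "tvars t \<subseteq> V \<Longrightarrow> (\<forall>L\<in>tforms x t. sgn (ev V L y) = sgn (ev V L x)) \<Longrightarrow> teval y t = ev V (lin x t) y"
proof (induction t)
  case (Meet s t)
  have es: "teval y s = ev V (lin x s) y" and et: "teval y t = ev V (lin x t) y" using Meet by auto
  have xs: "teval x s = ev V (lin x s) x" and xt: "teval x t = ev V (lin x t) x"
    using Meet.prems lin_self[OF assms] by auto
  have "sgn (ev V (dif (lin x s) (lin x t)) y) = sgn (ev V (dif (lin x s) (lin x t)) x)" using Meet.prems by simp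
  then have "(ev V (lin x s) y - ev V (lin x t) y \<le> 0) = (ev V (lin x s) x - ev V (lin x t) x \<le> 0)"
    unfolding ev_dif by (rule sgn_le_iff)
  then have iff: "(teval y s \<le> teval y t) = (teval x s \<le> teval x t)" using es et xs xt by linarith
  show ?case using iff es et by (auto simp: min_def)
next
  case (Join s t)
  have es: "teval y s = ev V (lin x s) y" and et: "teval y t = ev V (lin x t) y" using Join by auto
  have xs: "teval x s = ev V (lin x s) x" and xt: "teval x t = ev V (lin x t) x"
    using Join.prems lin_self[OF assms] by auto
  have "sgn (ev V (dif (lin x s) (lin x t)) y) = sgn (ev V (dif (lin x s) (lin x t)) x)" using Join.prems by simp
  then have "(ev V (lin x s) y - ev V (lin x t) y \<le> 0) = (ev V (lin x s) x - ev V (lin x t) x \<le> 0)"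
    unfolding ev_dif by (rule sgn_le_iff)
  then have iff: "(teval y s \<le> teval y t) = (teval x s \<le> teval x t)" using es et xs xt by linarith
  show ?case using iff es et by (auto simp: max_def)
qed (use assms in \<open>auto simp: ev_var ev_add ev_neg ev_zero\<close>)

lemma fholds_correct:
  assumes "finite V"
  shows "fvars \<Phi> \<subseteq> V \<Longrightarrow> (\<forall>L\<in>fforms x \<Phi>. sgn (ev V L y) = sgn (ev V L x)) \<Longrightarrow> fholds y \<Phi> = fholds x \<Phi>"
proof (induction \<Phi>)
  case (Eq s t)
  have es: "teval y s = ev V (lin x s) y" and et: "teval y t = ev V (lin x t) y"
    using Eq.prems lin_correct[OF assms] by auto
  have xs: "teval x s = ev V (lin x s) x" and xt: "teval x t = ev V (lin x t) x"
    using Eq.prems lin_self[OF assms] by auto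
  have "sgn (ev V (dif (lin x s) (lin x t)) y) = sgn (ev V (dif (lin x s) (lin x t)) x)" using Eq.prems by simp
  then have "sgn (ev V (lin x s) y - ev V (lin x t) y) = sgn (ev V (lin x s) x - ev V (lin x t) x)"
    unfolding ev_dif .
  then have "(ev V (lin x s) y - ev V (lin x t) y = 0) = (ev V (lin x s) x - ev V (lin x t) x = 0)"
    by (metis sgn_0_0)
  then show ?case using es et xs xt by simp
qed auto

lemma lin_bnd: "bnd (int (tsize t)) (lin x t)"
proof (induction t)
  case (Var i) then show ?case by (simp add: bnd_def)
next
  case Zero then show ?case by (simp add: bnd_def)
next
  case MinusOne then show ?case by (simp add: bnd_def)
next
  case (Add s t) then show ?case unfolding bnd_def
    by (simp add: abs_triangle_ineq order_trans[OF abs_triangle_ineq] add_mono)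
next
  case (Neg t) then show ?case by (simp add: bnd_def)
next
  case (Meet s t) then show ?case using bnd_mono by (auto simp: bnd_def) 
next
  case (Join s t) then show ?case using bnd_mono by (auto simp: bnd_def)
qed

lemma dif_bnd: "bnd A L1 \<Longrightarrow> bnd B L2 \<Longrightarrow> bnd (A + B) (dif L1 L2)"
  unfolding bnd_def dif_def by (simp add: abs_triangle_ineq4 order_trans[OF abs_triangle_ineq4] add_mono)

lemma tforms_bnd: "\<forall>L\<in>tforms x t. bnd (int (tsize t)) L"
proof (induction t)
  case (Add s t) then show ?case using bnd_mono by fastforce
next
  case (Neg t) then show ?case by simp
next
  case (Meet s t) then show ?case using bnd_mono dif_bnd[OF lin_bnd lin_bnd] by fastforce
next
  case (Join s t) then show ?case using bnd_mono dif_bnd[OF lin_bnd lin_bnd] by fastforce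
qed auto

lemma fforms_bnd: "\<forall>L\<in>fforms x \<Phi>. bnd (int (fsize \<Phi>)) L"
proof (induction \<Phi>)
  case (Eq s t) then show ?case using bnd_mono dif_bnd[OF lin_bnd lin_bnd] tforms_bnd by fastforce
next
  case (FAnd f g) then show ?case using bnd_mono by fastforce
next
  case (FOr f g) then show ?case using bnd_mono by fastforce
qed auto

lemma finite_tforms: "finite (tforms x t)" by (induction t) auto
lemma finite_fforms: "finite (fforms x \<Phi>)" by (induction \<Phi>) (auto simp: finite_tforms)
lemma finite_tvars: "finite (tvars t)" by (induction t) auto
lemma finite_fvars: "finite (fvars \<Phi>)" by (induction \<Phi>) (auto simp: finite_tvars)

lemma card_tvars: "card (tvars t) \<le> tsize t"
proof (induction t)
  case (Add s t)
  have "card (tvars s \<union> tvars t) \<le> card (tvars s) + card (tvars t)" by (rule card_Un_le)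
  then show ?case using Add by simp
next
  case (Meet s t)
  have "card (tvars s \<union> tvars t) \<le> card (tvars s) + card (tvars t)" by (rule card_Un_le)
  then show ?case using Meet by simp
next
  case (Join s t)
  have "card (tvars s \<union> tvars t) \<le> card (tvars s) + card (tvars t)" by (rule card_Un_le)
  then show ?case using Join by simp
qed auto
lemma card_fvars: "card (fvars \<Phi>) \<le> fsize \<Phi>"
proof (induction \<Phi>)
  case (Eq s t)
  have "card (tvars s \<union> tvars t) \<le> card (tvars s) + card (tvars t)" by (rule card_Un_le)
  then show ?case using card_tvars[of s] card_tvars[of t] by simp
next
  case (FAnd f g)
  have "card (fvars f \<union> fvars g) \<le> card (fvars f) + card (fvars g)" by (rule card_Un_le)
  then show ?case using FAnd by simp
next
  case (FOr f g)
  have "card (fvars f \<union> fvars g) \<le> card (fvars f) + card (fvars g)" by (rule card_Un_le)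
  then show ?case using FOr by simp
qed simp
lemma tsize_pos: "1 \<le> tsize t" by (induction t) auto
lemma fsize_ge2: "2 \<le> fsize \<Phi>"
proof (induction \<Phi>)
  case (Eq s t) then show ?case using tsize_pos[of s] tsize_pos[of t] by simp
qed auto

lemma n3_le: "n + 3 \<le> (32::nat) ^ (4 ^ n)"
proof -
  have a: "n < 2^n" by simp
  have b: "(2::nat)^n \<le> 4^n" by (rule power_mono) auto
  have c: "(2::nat)^n \<le> 32^n" by (rule power_mono) auto
  have "n + 1 \<le> 4^n" using a b by linarith
  then have "(32::nat)^(n+1) \<le> 32^(4^n)" by (rule power_increasing) auto
  moreover have "n + 3 \<le> (32::nat) * 32^n" using a c by linarith
  then have "n + 3 \<le> (32::nat)^(n+1)" by simp
  ultimately show ?thesis by linarith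
qed

lemma R_bound: "b \<ge> 1 \<Longrightarrow> R n b \<le> (4 * b) ^ (4 ^ n)"
proof (induction n arbitrary: b)
  case 0 then show ?case by simp
next
  case (Suc n)
  define k :: nat where "k = 4 ^ n"
  have k1: "1 \<le> k" unfolding k_def by simp
  have bb: "b * 1 \<le> b * b" using Suc.prems by (intro mult_left_mono) auto
  have b2: "1 \<le> 2 * b^2" using bb Suc.prems unfolding power2_eq_square by linarith
  define X where "X = (8 * b^2) ^ k"
  have IH: "R n (2 * b^2) \<le> X" using Suc.IH[OF b2] unfolding X_def k_def by simp
  have X1: "1 \<le> X" unfolding X_def using b2 by (intro one_le_power) simp
  have R0: "0 \<le> R n (2 * b^2)" using R_ge1[OF b2, of n] by linarith
  have "(4 * b) ^ (4 ^ Suc n) = ((4 * b) ^ 4) ^ k" unfolding k_def by (simp add: power_mult)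
  also have "(4 * b) ^ 4 = 8 * b^2 * (32 * b^2)" by algebra
  then have "((4 * b) ^ 4) ^ k = (8 * b^2 * (32 * b^2)) ^ k" by simp
  also have "\<dots> = X * (32 ^ k * (b^2) ^ k)" unfolding X_def by (simp only: power_mult_distrib)
  finally have eq: "(4 * b) ^ (4 ^ Suc n) = X * (32 ^ k * (b^2) ^ k)" .
  have bsq: "1 \<le> b * b" using bb Suc.prems by linarith
  have "b \<le> b^2" using bb unfolding power2_eq_square by simp
  also have "(b^2) ^ 1 \<le> (b^2) ^ k" using k1 bsq unfolding power2_eq_square by (intro power_increasing) auto
  then have "b^2 \<le> (b^2) ^ k" by simp
  finally have bk: "b \<le> (b^2) ^ k" .
  have n3: "real n + 3 \<le> 32 ^ k" using n3_le[of n] unfolding k_def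
    by (metis of_nat_add of_nat_le_iff of_nat_numeral of_nat_power)
  have "R (Suc n) b = (real n + 1) * b * R n (2 * b^2) + b + 1" by simp
  also have "\<dots> \<le> (real n + 1) * b * X + b * X + b * X"
  proof -
    have "(real n + 1) * b * R n (2 * b^2) \<le> (real n + 1) * b * X"
      using IH Suc.prems by (intro mult_left_mono) auto
    moreover have "b \<le> b * X" using X1 Suc.prems by (simp add: mult_le_cancel_left1)
    moreover have "1 \<le> b * X" using X1 Suc.prems by (metis mult_mono' mult_1 zero_le_one)
    ultimately show ?thesis by linarith
  qed
  also have "\<dots> = (real n + 3) * (b * X)" by (simp add: algebra_simps)
  also have "\<dots> \<le> 32 ^ k * (b * X)" using n3 X1 Suc.prems by (intro mult_right_mono) auto
  also have "\<dots> \<le> 32 ^ k * ((b^2) ^ k * X)" using bk X1 by (intro mult_left_mono mult_right_mono) auto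
  also have "\<dots> = (4 * b) ^ (4 ^ Suc n)" unfolding eq by (simp only: ac_simps)
  finally show ?case .
qed

lemma two_mul_le: "1 \<le> N \<Longrightarrow> 2 * N \<le> (2::nat) ^ N"
proof (induction N)
  case 0 then show ?case by simp
next
  case (Suc N)
  show ?case
  proof (cases "N = 0")
    case True then show ?thesis by simp
  next
    case False
    then have "2 * N \<le> 2 ^ N" using Suc by simp
    moreover have "2 \<le> (2::nat) ^ N" using False by (metis power_increasing power_one_right le_add_diff_inverse2 le_add1 One_nat_def Suc_leI neq0_conv zero_less_numeral one_le_numeral)
    ultimately show ?thesis by simp
  qed
qed

lemma nat_chain: "1 \<le> N \<Longrightarrow> c \<le> N \<Longrightarrow> (4 * N) ^ (4 ^ c) \<le> (2::nat) ^ (2 ^ (3 * N))"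
proof -
  assume N1: "1 \<le> N" and cN: "c \<le> N"
  have "(4 * N) ^ (4 ^ c) \<le> (4 * N) ^ (4 ^ N)"
    using N1 cN by (intro power_increasing) auto
  also have "4 * N \<le> (2::nat) ^ (2 * N)"
  proof -
    have "4 * N = 2 * (2 * N)" by simp
    also have "\<dots> \<le> 2 * 2 ^ N" using two_mul_le[OF N1] by simp
    also have "\<dots> = 2 ^ (N + 1)" by simp
    also have "\<dots> \<le> 2 ^ (2 * N)" using N1 by (intro power_increasing) auto
    finally show ?thesis .
  qed
  then have "(4 * N) ^ (4 ^ N) \<le> ((2::nat) ^ (2 * N)) ^ (4 ^ N)" by (rule power_mono) simp
  also have "\<dots> = 2 ^ (2 * N * 4 ^ N)" by (simp add: power_mult)
  also have "\<dots> \<le> 2 ^ (2 ^ (3 * N))"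
  proof (rule power_increasing)
    have "2 * N * 4 ^ N \<le> 2 ^ N * 4 ^ N" using two_mul_le[OF N1] by simp
    also have "\<dots> = 2 ^ (3 * N)"
    proof -
      have e4: "(4::nat) ^ N = 2 ^ (2 * N)" by (simp add: power_mult)
      have "(2::nat) ^ N * 2 ^ (2 * N) = 2 ^ (N + 2 * N)" by (rule power_add[symmetric])
      also have "N + 2 * N = 3 * N" by simp
      finally show ?thesis unfolding e4 .
    qed
    finally show "2 * N * 4 ^ N \<le> 2 ^ (3 * N)" .
  qed simp
  finally show ?thesis .
qed

lemma nbits_pow: "nbits (2 ^ k) = k + 1"
proof (induction k)
  case 0 then show ?case by (subst nbits.simps) simp
next
  case (Suc k)
  have "nbits (2 ^ Suc k) = Suc (nbits (2 ^ Suc k div 2))" by (subst nbits.simps) simp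
  then show ?case using Suc by simp
qed

lemma main_aux:
  fixes n :: nat and \<Phi> :: pform
  assumes fv: "fvars \<Phi> \<subseteq> {..<n}" and ex: "\<exists>x::nat \<Rightarrow> real. fholds x \<Phi>"
  shows "\<exists>(M::int) (a::nat \<Rightarrow> real).
        fholds a \<Phi> \<and>
        (\<forall>i<n. - ((2::real) powr of_int M) \<le> a i \<and> a i \<le> (2::real) powr of_int M) \<and>
        real (ibits M) \<le> real_of_int 5 * real (fsize \<Phi>) * log 2 (real (fsize \<Phi>))"
proof -
  from ex obtain x where hx: "fholds x \<Phi>" by blast
  define N where "N = fsize \<Phi>"
  define V where "V = fvars \<Phi>"
  have N2: "2 \<le> N" unfolding N_def by (rule fsize_ge2)
  have finV: "finite V" unfolding V_def by (rule finite_fvars)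
  have cV: "card V \<le> N" unfolding V_def N_def by (rule card_fvars)
  have B1: "1 \<le> int N" using N2 by simp
  have bF: "\<forall>L\<in>fforms x \<Phi>. bnd (int N) L" unfolding N_def by (rule fforms_bnd)
  have "\<exists>y. (\<forall>L\<in>fforms x \<Phi>. sgn (ev V L y) = sgn (ev V L x)) \<and> (\<forall>i\<in>V. \<bar>y i\<bar> \<le> R (card V) (of_int (int N)))"
    by (rule elim[OF finV, THEN spec[of _ "int N"], THEN spec[of _ "fforms x \<Phi>"], THEN spec[of _ x], THEN mp, THEN mp, THEN mp])
       (use B1 finite_fforms bF in auto)
  then obtain y where ysg: "\<forall>L\<in>fforms x \<Phi>. sgn (ev V L y) = sgn (ev V L x)"
    and yb: "\<forall>i\<in>V. \<bar>y i\<bar> \<le> R (card V) (real N)" by auto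
  define a where "a i = (if i \<in> V then y i else 0)" for i
  have eva: "ev V L a = ev V L y" for L unfolding a_def by (rule ev_cong) simp
  have asg: "\<forall>L\<in>fforms x \<Phi>. sgn (ev V L a) = sgn (ev V L x)" using ysg eva by simp
  have sub: "fvars \<Phi> \<subseteq> V" unfolding V_def by simp
  have ha: "fholds a \<Phi>"
    using fholds_correct[OF finV sub asg] hx by simp
  define M :: int where "M = int (2 ^ (3 * N))"
  have pw: "(2::real) powr of_int M = 2 ^ (2 ^ (3 * N))"
    unfolding M_def using powr_realpow[of 2 "2 ^ (3 * N)"] by simp
  have RN1: "(1::real) \<le> real N" using N2 by simp
  have Rb: "R (card V) (real N) \<le> 2 ^ (2 ^ (3 * N))"
  proof -
    have "R (card V) (real N) \<le> (4 * real N) ^ (4 ^ card V)" using R_bound[OF RN1] .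
    also have "\<dots> = real ((4 * N) ^ (4 ^ card V))" by simp
    also have "\<dots> \<le> real ((2::nat) ^ (2 ^ (3 * N)))"
      unfolding of_nat_le_iff using nat_chain[of N "card V"] N2 cV by linarith
    also have "\<dots> = 2 ^ (2 ^ (3 * N))" by simp
    finally show ?thesis .
  qed
  have R1: "1 \<le> R (card V) (real N)" using R_ge1[OF RN1] .
  have abound: "\<bar>a i\<bar> \<le> 2 powr of_int M" for i
  proof (cases "i \<in> V")
    case True
    then have "a i = y i" unfolding a_def by simp
    moreover have "\<bar>y i\<bar> \<le> R (card V) (real N)" using yb True by simp
    ultimately show ?thesis using Rb unfolding pw by linarith
  next
    case False
    then show ?thesis unfolding pw a_def by simp
  qed
  have ib: "ibits M = 3 * N + 2"
    unfolding ibits_def M_def abs_of_nat nat_int nbits_pow by simp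
  have lg: "1 \<le> log 2 (real N)" using N2 by simp
  have "real (ibits M) \<le> 5 * real N * 1" unfolding ib using N2 by simp
  also have "\<dots> \<le> 5 * real N * log 2 (real N)" using lg by (intro mult_left_mono) auto
  finally have bits: "real (ibits M) \<le> real_of_int 5 * real (fsize \<Phi>) * log 2 (real (fsize \<Phi>))"
    unfolding N_def by simp
  have abs_bd: "\<forall>i<n. - ((2::real) powr of_int M) \<le> a i \<and> a i \<le> (2::real) powr of_int M"
  proof (intro allI impI)
    fix i :: nat
    have "\<bar>a i\<bar> \<le> 2 powr of_int M" by (rule abound)
    then show "- ((2::real) powr of_int M) \<le> a i \<and> a i \<le> (2::real) powr of_int M" by linarith
  qed
  show "\<exists>(M::int) (a::nat \<Rightarrow> real).
        fholds a \<Phi> \<and>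
        (\<forall>i<n. - ((2::real) powr of_int M) \<le> a i \<and> a i \<le> (2::real) powr of_int M) \<and>
        real (ibits M) \<le> real_of_int 5 * real (fsize \<Phi>) * log 2 (real (fsize \<Phi>))"
    using ha bits abs_bd by blast
qed


theorem mainTheorem3:
  "\<exists>c::int. \<forall>(n::nat) (\<Phi>::pform).
     fvars \<Phi> \<subseteq> {..<n} \<longrightarrow>
     (\<exists>x::nat \<Rightarrow> real. fholds x \<Phi>) \<longrightarrow>
     (\<exists>(M::int) (a::nat \<Rightarrow> real).
        fholds a \<Phi> \<and>
        (\<forall>i<n. - ((2::real) powr of_int M) \<le> a i \<and> a i \<le> (2::real) powr of_int M) \<and>
        real (ibits M) \<le> real_of_int c * real (fsize \<Phi>) * log 2 (real (fsize \<Phi>)))"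
  by (rule exI[of _ 5], intro allI impI) (rule main_aux)

end
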